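(* Let $\lambda$ be a nonzero real number and $n$ a positive integer. Then $$\frac{\lambda^{n-1}}{n}(1)_{n,\frac{1}{\lambda}}=\sum_{k=1}^{n}\beta_{k-1,\lambda}(1-\lambda)\,S_{1,\lambda}(n,k).$$
   Context: For real $y$, $\mu\neq 0$ and integer $k\ge0$: $(y)_{0,\mu}=1$, $(y)_{k,\mu}=y(y-\mu)\cdots(y-(k-1)\mu)$ (used with $\mu=\lambda$ and $\mu=1/\lambda$); $(y)_0=1$, $(y)_k=y(y-1)\cdots(y-k+1)$. The degenerate exponential is $e_\lambda^x(t)=\sum_{k\ge0}(x)_{k,\lambda}t^k/k!=(1+\lambda t)^{x/\lambda}$, $e_\lambda(t)=e^1_\lambda(t)$. The degenerate Bernoulli polynomials are defined by $\frac{t}{e_\lambda(t)-1}e_\lambda^x(t)=\sum_{n\ge0}\beta_{n,\lambda}(x)\frac{t^n}{n!}$. The degenerate Stirling numbers of the first kind are defined by $(x)_{n}=\sum_{k=0}^{n}S_{1,\lambda}(n,k)(x)_{k,\lambda}$ ($n\ge0$). *)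

theory Defs
  imports "HOL-Analysis.Analysis" "HOL-Computational_Algebra.Formal_Power_Series"
begin

definition gen_fall :: "real \<Rightarrow> nat \<Rightarrow> real \<Rightarrow> real" where
  "gen_fall y k mu = (\<Prod>i<k. (y - of_nat i * mu))"

definition fall :: "real \<Rightarrow> nat \<Rightarrow> real" where
  "fall y k = gen_fall y k 1"

definition deg_exp :: "real \<Rightarrow> real \<Rightarrow> real fps" where
  "deg_exp lam x = Abs_fps (\<lambda>k. gen_fall x k lam / fact k)"

definition deg_bernoulli :: "nat \<Rightarrow> real \<Rightarrow> real \<Rightarrow> real" where
  "deg_bernoulli n lam x =
     fact n * fps_nth (fps_X / (deg_exp lam 1 - 1) * deg_exp lam x) n"

definition deg_stirling1 :: "real \<Rightarrow> nat \<Rightarrow> nat \<Rightarrow> real" where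
  "deg_stirling1 lam n k =
     (THE s :: nat \<Rightarrow> real. (\<forall>x. fall x n = (\<Sum>j=0..n. s j * gen_fall x j lam))
                         \<and> (\<forall>j>n. s j = 0)) k"

end

theory Submission
  imports Defs
begin
unbundle no vec_syntax unbundle fps_syntax

lemma gen_fall_Suc: "gen_fall x (Suc k) lam = gen_fall x k lam * (x - of_nat k * lam)"
  by (simp add: gen_fall_def)

lemma gen_fall_0[simp]: "gen_fall x 0 lam = 1"
  by (simp add: gen_fall_def)

lemma deg_exp_nth: "deg_exp lam x $ k = gen_fall x k lam / fact k"
  by (simp add: deg_exp_def)

lemma deg_exp_ode:
  "(1 + fps_const lam * fps_X) * fps_deriv (deg_exp lam x) = fps_const x * deg_exp lam x"
proof (rule fps_ext)
  fix n
  have eq: "1 + fps_const lam * fps_X = 1 + fps_X * fps_const lam" by (simp add: mult.commute)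
  show "((1 + fps_const lam * fps_X) * fps_deriv (deg_exp lam x)) $ n = (fps_const x * deg_exp lam x) $ n"
  proof (cases n)
    case 0
    then show ?thesis by (simp add: eq distrib_right deg_exp_nth gen_fall_def mult.assoc)
  next
    case (Suc m)
    have "((1 + fps_const lam * fps_X) * fps_deriv (deg_exp lam x)) $ n
        = gen_fall x (Suc (Suc m)) lam / fact (Suc m) + lam * gen_fall x (Suc m) lam / fact m"
      using Suc by (simp add: eq distrib_right deg_exp_nth mult.assoc del: of_nat_Suc fact_Suc)
        (simp add: fact_Suc field_simps del: of_nat_Suc)
    also have "\<dots> = x * gen_fall x (Suc m) lam / fact (Suc m)"
    proof -
      have f: "fact (Suc m) = (real m + 1) * fact m" by simp
      have a: "fact m \<noteq> (0::real)" by simp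
      have b: "real m + 1 \<noteq> 0" by linarith
      have c: "(real m + 1) * fact m \<noteq> 0" using a b by simp
      show ?thesis unfolding gen_fall_Suc[of x "Suc m"] f
        using a b c by (simp add: divide_simps) (simp add: algebra_simps)
    qed
    finally show ?thesis using Suc by (simp add: deg_exp_nth)
  qed
qed

definition UU :: "real \<Rightarrow> real fps" where
  "UU lam = fps_const (1/lam) * (fps_binomial lam - 1)"

lemma UU_0[simp]: "UU lam $ 0 = 0"
  by (simp add: UU_def)

lemma UU_nth: "n > 0 \<Longrightarrow> UU lam $ n = (lam gchoose n) / lam"
  by (simp add: UU_def)

lemma UU_binom: "lam \<noteq> 0 \<Longrightarrow> 1 + fps_const lam * UU lam = fps_binomial lam"
  by (simp add: UU_def fps_const_mult[symmetric] mult.assoc[symmetric])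

lemma UU_deriv: "lam \<noteq> 0 \<Longrightarrow> (1 + fps_X) * fps_deriv (UU lam) = fps_binomial lam"
proof -
  assume l: "lam \<noteq> 0"
  have u: "is_unit (1 + fps_X :: real fps)" by simp
  have "(1 + fps_X) * fps_deriv (fps_binomial lam) = fps_const lam * fps_binomial lam"
    using unit_eq_div2[OF u] fps_binomial_deriv[of lam] by (simp add: mult.commute)
  then show ?thesis using l
  proof -
    have "(1 + fps_X) * fps_deriv (UU lam) = fps_const (1/lam) * ((1 + fps_X) * fps_deriv (fps_binomial lam))"
      by (simp add: UU_def algebra_simps)
    also have "\<dots> = (fps_const (1/lam) * fps_const lam) * fps_binomial lam"
      by (simp only: \<open>(1 + fps_X) * fps_deriv (fps_binomial lam) = fps_const lam * fps_binomial lam\<close> mult.assoc)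
    also have "\<dots> = fps_binomial lam" using l by (simp flip: fps_const_mult)
    finally show ?thesis .
  qed
qed

lemma deg_exp_compose:
  assumes l: "lam \<noteq> 0"
  shows "deg_exp lam x oo UU lam = fps_binomial x"
proof -
  let ?D = "deg_exp lam x oo UU lam"
  have u: "is_unit (1 + fps_X :: real fps)" by simp
  have c1: "(1 + fps_const lam * fps_X) oo UU lam = fps_binomial lam"
    using UU_binom[OF l] by (simp add: fps_compose_add_distrib fps_compose_mult_distrib)
  have "(1 + fps_X) * fps_deriv ?D = (fps_deriv (deg_exp lam x) oo UU lam) * ((1 + fps_X) * fps_deriv (UU lam))"
    by (simp add: fps_compose_deriv)
  also have "\<dots> = (fps_deriv (deg_exp lam x) oo UU lam) * ((1 + fps_const lam * fps_X) oo UU lam)"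
    using UU_deriv[OF l] c1 by simp
  also have "\<dots> = ((1 + fps_const lam * fps_X) * fps_deriv (deg_exp lam x)) oo UU lam"
    by (simp add: fps_compose_mult_distrib mult.commute)
  also have "\<dots> = fps_const x * ?D"
    by (simp add: deg_exp_ode fps_compose_mult_distrib)
  finally have "(1 + fps_X) * fps_deriv ?D = fps_const x * ?D" .
  then have "fps_deriv ?D = fps_const x * ?D / (1 + fps_X)"
    using unit_eq_div2[OF u] by (simp add: mult.commute)
  moreover have "?D $ 0 = 1" by (simp add: deg_exp_nth)
  ultimately show ?thesis using fps_binomial_ODE_unique' by blast
qed

lemma fall_gchoose: "fall x n = fact n * (x gchoose n)"
  by (simp add: fall_def gen_fall_def gbinomial_prod_rev atLeast0LessThan)

lemma fall_expand:
  assumes l: "lam \<noteq> 0"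
  shows "fall x n = (\<Sum>j=0..n. (fact n * (UU lam ^ j) $ n / fact j) * gen_fall x j lam)"
proof -
  have "x gchoose n = (deg_exp lam x oo UU lam) $ n"
    using deg_exp_compose[OF l] by simp
  also have "\<dots> = (\<Sum>j=0..n. gen_fall x j lam / fact j * (UU lam ^ j) $ n)"
    by (simp add: fps_compose_nth deg_exp_nth)
  finally show ?thesis
    by (auto simp: fall_gchoose sum_distrib_left intro!: sum.cong)
qed

lemma gen_fall_mlam_zero: "m < j \<Longrightarrow> gen_fall (real m * lam) j lam = 0"
  unfolding gen_fall_def by (rule prod_zero) auto

lemma gen_fall_mlam_nz: "lam \<noteq> 0 \<Longrightarrow> gen_fall (real m * lam) m lam \<noteq> 0"
proof -
  assume l: "lam \<noteq> 0"
  have "\<forall>i\<in>{..<m}. real m * lam - real i * lam \<noteq> 0"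
  proof
    fix i assume "i \<in> {..<m}"
    then have "real m - real i \<noteq> 0" by simp
    then show "real m * lam - real i * lam \<noteq> 0" using l
      by (metis left_diff_distrib mult_eq_0_iff)
  qed
  then show ?thesis unfolding gen_fall_def using l by simp
qed

lemma gen_fall_indep:
  assumes l: "lam \<noteq> 0" and h: "\<forall>x. (\<Sum>j=0..n. d j * gen_fall x j lam) = 0"
  shows "\<forall>j\<le>n. d j = 0"
proof -
  have "m \<le> n \<longrightarrow> d m = 0" for m
  proof (induction m rule: less_induct)
    case (less m)
    show ?case
    proof
      assume mn: "m \<le> n"
      have "0 = (\<Sum>j=0..n. d j * gen_fall (real m * lam) j lam)" using h by simp
      also have "\<dots> = (\<Sum>j\<in>{m}. d j * gen_fall (real m * lam) j lam)"
      proof (rule sum.mono_neutral_right)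
        show "\<forall>i\<in>{0..n} - {m}. d i * gen_fall (real m * lam) i lam = 0"
        proof
          fix i assume i: "i \<in> {0..n} - {m}"
          show "d i * gen_fall (real m * lam) i lam = 0"
          proof (cases "i < m")
            case True then show ?thesis using less.IH i by auto
          next
            case False then have "m < i" using i by auto
            then show ?thesis by (simp add: gen_fall_mlam_zero)
          qed
        qed
      qed (use mn in auto)
      finally show "d m = 0" using gen_fall_mlam_nz[OF l, of m] by simp
    qed
  qed
  then show ?thesis by blast
qed

lemma stirling_eq:
  assumes l: "lam \<noteq> 0"
  shows "deg_stirling1 lam n k = fact n * (UU lam ^ k) $ n / fact k"
proof -
  define s0 where "s0 = (\<lambda>j. fact n * (UU lam ^ j) $ n / fact j :: real)"
  let ?P = "\<lambda>s :: nat \<Rightarrow> real. (\<forall>x. fall x n = (\<Sum>j=0..n. s j * gen_fall x j lam)) \<and> (\<forall>j>n. s j = 0)"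
  have P0: "?P s0"
  proof
    show "\<forall>x. fall x n = (\<Sum>j=0..n. s0 j * gen_fall x j lam)"
      using fall_expand[OF l] by (simp add: s0_def)
    show "\<forall>j>n. s0 j = 0"
    proof (intro allI impI)
      fix j assume "n < j"
      then have "(UU lam ^ j) $ n = 0" using startsby_zero_power_prefix[of "UU lam" j] by simp
      then show "s0 j = 0" by (simp add: s0_def)
    qed
  qed
  have uniq: "s = s0" if Ps: "?P s" for s
  proof
    fix j
    show "s j = s0 j"
    proof (cases "j \<le> n")
      case True
      have "\<forall>x. (\<Sum>i=0..n. (s i - s0 i) * gen_fall x i lam) = 0"
      proof
        fix x
        have "(\<Sum>i=0..n. (s i - s0 i) * gen_fall x i lam)
            = (\<Sum>i=0..n. s i * gen_fall x i lam) - (\<Sum>i=0..n. s0 i * gen_fall x i lam)"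
          by (simp add: left_diff_distrib sum_subtractf)
        then show "(\<Sum>i=0..n. (s i - s0 i) * gen_fall x i lam) = 0"
        proof -
          have "(\<Sum>i=0..n. s i * gen_fall x i lam) = fall x n" using Ps by simp
          moreover have "(\<Sum>i=0..n. s0 i * gen_fall x i lam) = fall x n" using P0 by simp
          ultimately show ?thesis using \<open>(\<Sum>i=0..n. (s i - s0 i) * gen_fall x i lam) = _\<close> by simp
        qed
      qed
      from gen_fall_indep[OF l this] True show ?thesis by simp
    next
      case False then show ?thesis using Ps P0 by simp
    qed
  qed
  have "deg_stirling1 lam n = s0"
    unfolding deg_stirling1_def
    by (rule the_equality[where P = ?P, OF P0]) (rule uniq)
  then show ?thesis by (simp add: s0_def)
qed

lemma E1_dvd:
  assumes l: "lam \<noteq> 0"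
  shows "(deg_exp lam 1 - 1) dvd (fps_X :: real fps)"
proof -
  define W where "W = fps_shift 1 (deg_exp lam 1 - 1)"
  have eq: "deg_exp lam 1 - 1 = fps_X * W"
    by (rule fps_ext) (simp add: W_def deg_exp_nth)
  have W0: "W $ 0 \<noteq> 0" by (simp add: W_def deg_exp_nth gen_fall_def)
  have "fps_X = (deg_exp lam 1 - 1) * inverse W"
    unfolding eq using inverse_mult_eq_1'[OF W0] by (simp add: mult.assoc)
  then show ?thesis by (rule dvdI)
qed

lemma Phi_eq:
  assumes l: "lam \<noteq> 0"
  shows "(fps_X / (deg_exp lam 1 - 1) * deg_exp lam y) * (deg_exp lam 1 - 1) = fps_X * deg_exp lam y"
proof -
  have "fps_X / (deg_exp lam 1 - 1) * (deg_exp lam 1 - 1) = (fps_X :: real fps)"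
    using E1_dvd[OF l] by (rule dvd_div_mult_self)
  then show ?thesis by (metis mult.assoc mult.commute)
qed

lemma AU_coeff:
  assumes l: "lam \<noteq> 0" and n: "n \<ge> 1"
  defines "A \<equiv> Abs_fps (\<lambda>k. if k = 0 then 0 else deg_bernoulli (k-1) lam (1-lam) / fact k)"
  shows "real n * (A oo UU lam) $ n = (lam gchoose n) / lam"
proof -
  define Phi where "Phi = fps_X / (deg_exp lam 1 - 1) * deg_exp lam (1 - lam)"
  have dA: "fps_deriv A = Phi"
  proof (rule fps_ext)
    fix m
    have h: "1 + real m \<noteq> 0" by linarith
    have f: "(fact (Suc m)::real) = (1 + real m) * fact m" by simp
    have ca: "(c::real) \<noteq> 0 \<Longrightarrow> c * (b / (c * g)) = b / g" for b c g
      by (cases "g = 0") (simp_all add: field_simps)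
    have "fps_deriv A $ m = (1 + real m) * (deg_bernoulli m lam (1 - lam) / fact (Suc m))"
      by (simp add: A_def del: of_nat_Suc fact_Suc)
    also have "\<dots> = deg_bernoulli m lam (1 - lam) / fact m"
      unfolding f by (rule ca[OF h])
    also have "\<dots> = Phi $ m" by (simp add: deg_bernoulli_def Phi_def)
    finally show "fps_deriv A $ m = Phi $ m" .
  qed
  have U0: "UU lam $ 0 = 0" by simp
  have c1: "(Phi oo UU lam) * fps_X = UU lam * fps_binomial (1 - lam)"
  proof -
    have "(Phi * (deg_exp lam 1 - 1)) oo UU lam = (fps_X * deg_exp lam (1 - lam)) oo UU lam"
      unfolding Phi_def Phi_eq[OF l, of "1 - lam"] by (rule refl)
    then have "(Phi oo UU lam) * ((deg_exp lam 1 oo UU lam) - 1) = UU lam * (deg_exp lam (1 - lam) oo UU lam)"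
      by (simp add: fps_compose_mult_distrib fps_compose_sub_distrib)
    then show ?thesis by (simp add: deg_exp_compose[OF l] fps_binomial_1)
  qed
  have "(fps_X * fps_deriv (A oo UU lam)) * (1 + fps_X) = ((Phi oo UU lam) * fps_X) * ((1 + fps_X) * fps_deriv (UU lam))"
    by (simp add: fps_compose_deriv dA mult_ac)
  also have "\<dots> = UU lam * (fps_binomial (1 - lam) * fps_binomial lam)"
    unfolding c1 UU_deriv[OF l] by (simp add: mult_ac)
  also have "\<dots> = UU lam * (1 + fps_X)"
    by (simp flip: fps_binomial_add_mult add: fps_binomial_1)
  finally have "fps_X * fps_deriv (A oo UU lam) = UU lam"
    by (subst (asm) mult_cancel_right) simp
  then have "(fps_X * fps_deriv (A oo UU lam)) $ n = UU lam $ n" by simp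
  then show ?thesis using n by (simp add: UU_nth)
qed

theorem theorem10:
  fixes lam :: real and n :: nat
  assumes "lam \<noteq> 0" and "n \<ge> 1"
  shows "lam ^ (n - 1) / real n * gen_fall 1 n (1 / lam)
         = (\<Sum>k=1..n. deg_bernoulli (k - 1) lam (1 - lam) * deg_stirling1 lam n k)"
proof -
  note l = assms(1) and n = assms(2)
  define A where "A = Abs_fps (\<lambda>k. if k = 0 then 0 else deg_bernoulli (k-1) lam (1-lam) / fact k)"
  have "(\<Sum>k=1..n. deg_bernoulli (k - 1) lam (1 - lam) * deg_stirling1 lam n k)
      = (\<Sum>k=1..n. fact n * (A $ k * (UU lam ^ k) $ n))"
    by (rule sum.cong) (auto simp: stirling_eq[OF l] A_def)
  also have "\<dots> = fact n * (\<Sum>k=0..n. A $ k * (UU lam ^ k) $ n)"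
    by (simp add: sum_distrib_left sum.atLeast_Suc_atMost A_def)
  also have "\<dots> = fact n * (A oo UU lam) $ n" by (simp add: fps_compose_nth)
  also have "\<dots> = fact n * (lam gchoose n) / (lam * real n)"
  proof -
    have "real n * (A oo UU lam) $ n = (lam gchoose n) / lam"
      using AU_coeff[OF l n] unfolding A_def .
    moreover have "real n \<noteq> 0" using n by simp
    ultimately have "(A oo UU lam) $ n = (lam gchoose n) / lam / real n"
      using l by (simp add: eq_divide_eq mult_ac)
    then show ?thesis by simp
  qed
  also have "\<dots> = (\<Prod>i<n. lam - real i) / (lam * real n)"
    using fall_gchoose[of lam n] by (simp add: fall_def gen_fall_def)
  also have "(\<Prod>i<n. lam - real i) = lam ^ n * gen_fall 1 n (1 / lam)"
  proof -
    have "(\<Prod>i<n. lam - real i) = (\<Prod>i<n. lam * (1 - real i * (1 / lam)))"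
      using l by (intro prod.cong) (auto simp: field_simps)
    then show ?thesis by (simp add: prod.distrib gen_fall_def)
  qed
  also have "lam ^ n * gen_fall 1 n (1 / lam) / (lam * real n) = lam ^ (n - 1) / real n * gen_fall 1 n (1 / lam)"
  proof -
    have "lam ^ n = lam * lam ^ (n - 1)" using n by (simp add: power_eq_if)
    then show ?thesis using l by simp
  qed
  finally show ?thesis ..
qed

end
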